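(* Consider a Markov decision process with stochastic policy $\pi$, transition density $T$ and initial state distribution $\alpha$. Let $0<\beta<\gamma<1$. Let $\rho_T(s,a)$ be the normalized occupancy measure generated by $(\alpha,\pi,T)$ with discount factor $\gamma$, and let $\rho_T^\beta(s,a)$ be the normalized occupancy measure generated by $(\rho_T,\pi,T)$ with discount factor $\beta$ (i.e. trajectories started from $(s_0,a_0)\sim\rho_T$ and continued under $\pi$ and $T$). Then $$D_{TV}(\rho_T\,\|\,\rho_T^\beta)\le\frac{(1-\gamma)\beta}{\gamma-\beta}.$$
   Context: The normalized occupancy measure generated by $(\mu,\pi,T)$ with discount factor $\lambda\in(0,1)$ is $\sum_{t=0}^\infty(1-\lambda)\lambda^t\,\mathbb{P}(s_t=s,a_t=a)$, where the trajectory starts from $\mu$ and evolves by $a_t\sim\pi(\cdot\mid s_t)$, $s_{t+1}\sim T(\cdot\mid s_t,a_t)$. The total variation distance is $D_{TV}(p\,\|\,q)=\frac12\int|p-q|$. *)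

theory Defs
  imports "HOL-Probability.Probability"
begin

(* General (measurable) state space S and action space A, each with a sigma-finite
reference measure.  All distributions are given by densities with respect to these
reference measures: an initial state density alpha, a policy density pi s a
(density of the action a given state s), and a transition density T s a s'
(density of the next state s' given (s,a)). *)

(* One step of the state-action process: if p is the density of (s_t,a_t), then
step p is the density of (s_{t+1},a_{t+1}), where s_{t+1} ~ T(.|s_t,a_t) and
a_{t+1} ~ pi(.|s_{t+1}). *)
definition sa_step ::
  "'s measure \<Rightarrow> 'a measure \<Rightarrow> ('s \<Rightarrow> 'a \<Rightarrow> real) \<Rightarrow> ('s \<Rightarrow> 'a \<Rightarrow> 's \<Rightarrow> real)
   \<Rightarrow> ('s \<times> 'a \<Rightarrow> real) \<Rightarrow> ('s \<times> 'a \<Rightarrow> real)" where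
  "sa_step S A pol T p =
     (\<lambda>(s', a'). enn2real (\<integral>\<^sup>+ x. ennreal (p x * T (fst x) (snd x) s') \<partial>(S \<Otimes>\<^sub>M A)) * pol s' a')"

definition sa_dist ::
  "'s measure \<Rightarrow> 'a measure \<Rightarrow> ('s \<Rightarrow> 'a \<Rightarrow> real) \<Rightarrow> ('s \<Rightarrow> 'a \<Rightarrow> 's \<Rightarrow> real)
   \<Rightarrow> ('s \<times> 'a \<Rightarrow> real) \<Rightarrow> nat \<Rightarrow> ('s \<times> 'a \<Rightarrow> real)" where
  "sa_dist S A pol T p0 t = (sa_step S A pol T ^^ t) p0"

definition occupancy ::
  "'s measure \<Rightarrow> 'a measure \<Rightarrow> ('s \<Rightarrow> 'a \<Rightarrow> real) \<Rightarrow> ('s \<Rightarrow> 'a \<Rightarrow> 's \<Rightarrow> real)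
   \<Rightarrow> real \<Rightarrow> ('s \<times> 'a \<Rightarrow> real) \<Rightarrow> ('s \<times> 'a \<Rightarrow> real)" where
  "occupancy S A pol T lam p0 =
     (\<lambda>x. enn2real (\<Sum>t. ennreal ((1 - lam) * lam ^ t * sa_dist S A pol T p0 t x)))"

definition init_sa :: "('s \<Rightarrow> real) \<Rightarrow> ('s \<Rightarrow> 'a \<Rightarrow> real) \<Rightarrow> ('s \<times> 'a \<Rightarrow> real)" where
  "init_sa alpha pol = (\<lambda>(s, a). alpha s * pol s a)"

definition tv_dist :: "'b measure \<Rightarrow> ('b \<Rightarrow> real) \<Rightarrow> ('b \<Rightarrow> real) \<Rightarrow> real" where
  "tv_dist M p q = 1/2 * (\<integral> x. \<bar>p x - q x\<bar> \<partial>M)"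

end

theory Submission
  imports Defs
begin


locale mdp =
  fixes S :: "'s measure" and A :: "'a measure" and pol :: "'s \<Rightarrow> 'a \<Rightarrow> real"
    and T :: "'s \<Rightarrow> 'a \<Rightarrow> 's \<Rightarrow> real"
  assumes sfS: "sigma_finite_measure S" and sfA: "sigma_finite_measure A"
    and pol_meas: "(\<lambda>(s, a). pol s a) \<in> borel_measurable (S \<Otimes>\<^sub>M A)"
    and pol_nonneg: "\<And>s a. pol s a \<ge> 0"
    and pol_norm: "\<And>s. s \<in> space S \<Longrightarrow> (\<integral>\<^sup>+ a. ennreal (pol s a) \<partial>A) = 1"
    and T_meas: "(\<lambda>((s, a), s'). T s a s') \<in> borel_measurable ((S \<Otimes>\<^sub>M A) \<Otimes>\<^sub>M S)"
    and T_nonneg: "\<And>s a s'. T s a s' \<ge> 0"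
    and T_norm: "\<And>s a. s \<in> space S \<Longrightarrow> a \<in> space A \<Longrightarrow> (\<integral>\<^sup>+ s'. ennreal (T s a s') \<partial>S) = 1"
begin

abbreviation "M \<equiv> S \<Otimes>\<^sub>M A"
definition "Tm z = T (fst (fst z)) (snd (fst z)) (snd z)"
definition "Pm y = pol (fst y) (snd y)"

lemma Tm_meas[measurable]: "Tm \<in> borel_measurable (M \<Otimes>\<^sub>M S)"
proof -
  have "Tm = (\<lambda>((s, a), s'). T s a s')" by (auto simp: Tm_def fun_eq_iff)
  then show ?thesis using T_meas by simp
qed

lemma Pm_meas[measurable]: "Pm \<in> borel_measurable M"
proof -
  have "Pm = (\<lambda>(s, a). pol s a)" by (auto simp: Pm_def fun_eq_iff)
  then show ?thesis using pol_meas by simp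
qed

lemma Tm_nonneg[simp]: "Tm z \<ge> 0" by (simp add: Tm_def T_nonneg)
lemma Pm_nonneg[simp]: "Pm z \<ge> 0" by (simp add: Pm_def pol_nonneg)

lemma sfM: "sigma_finite_measure M" by (rule sigma_finite_pair_measure[OF sfS sfA])

definition K :: "('s \<times> 'a \<Rightarrow> ennreal) \<Rightarrow> ('s \<times> 'a \<Rightarrow> ennreal)" where
  "K h y = (\<integral>\<^sup>+x. h x * ennreal (Tm (x, fst y)) \<partial>M) * ennreal (Pm y)"

lemma J_meas:
  assumes [measurable]: "h \<in> borel_measurable M"
  shows "(\<lambda>s'. \<integral>\<^sup>+x. h x * ennreal (Tm (x, s')) \<partial>M) \<in> borel_measurable S"
proof -
  interpret Mf: sigma_finite_measure M by (rule sfM)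
  show ?thesis by (rule Mf.borel_measurable_nn_integral) measurable
qed

lemma K_meas[measurable]:
  assumes [measurable]: "h \<in> borel_measurable M"
  shows "K h \<in> borel_measurable M"
proof -
  note J_meas[OF assms, measurable]
  show ?thesis unfolding K_def[abs_def] by measurable
qed

lemma K_int:
  assumes [measurable]: "h \<in> borel_measurable M"
  shows "(\<integral>\<^sup>+ y. K h y \<partial>M) = (\<integral>\<^sup>+ x. h x \<partial>M)"
proof -
  interpret SA: pair_sigma_finite S A using sfS sfA by (simp add: pair_sigma_finite_def)
  interpret MS: pair_sigma_finite M S using sfM sfS by (simp add: pair_sigma_finite_def)
  define J where "J s' = (\<integral>\<^sup>+x. h x * ennreal (Tm (x, s')) \<partial>M)" for s'
  have [measurable]: "J \<in> borel_measurable S" unfolding J_def by (rule J_meas) simp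
  have "(\<integral>\<^sup>+ y. K h y \<partial>M) = (\<integral>\<^sup>+ s'. (\<integral>\<^sup>+ a. J s' * ennreal (Pm (s', a)) \<partial>A) \<partial>S)"
    unfolding K_def J_def[symmetric]
    using SA.M2.nn_integral_fst[of "\<lambda>y. J (fst y) * ennreal (Pm y)" S, symmetric] by simp
  also have "\<dots> = (\<integral>\<^sup>+ s'. J s' \<partial>S)"
  proof (rule nn_integral_cong)
    fix s' assume s': "s' \<in> space S"
    have "(\<integral>\<^sup>+ a. J s' * ennreal (Pm (s', a)) \<partial>A) = J s' * (\<integral>\<^sup>+ a. ennreal (Pm (s', a)) \<partial>A)"
      using measurable_Pair2[OF Pm_meas s'] by (intro nn_integral_cmult) simp
    also have "\<dots> = J s'" using pol_norm[OF s'] by (simp add: Pm_def)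
    finally show "(\<integral>\<^sup>+ a. J s' * ennreal (Pm (s', a)) \<partial>A) = J s'" .
  qed
  also have "\<dots> = (\<integral>\<^sup>+ x. (\<integral>\<^sup>+ s'. h x * ennreal (Tm (x, s')) \<partial>S) \<partial>M)"
    unfolding J_def by (rule MS.Fubini') measurable
  also have "\<dots> = (\<integral>\<^sup>+ x. h x \<partial>M)"
  proof (rule nn_integral_cong)
    fix x assume x: "x \<in> space M"
    have "(\<integral>\<^sup>+ s'. h x * ennreal (Tm (x, s')) \<partial>S) = h x * (\<integral>\<^sup>+ s'. ennreal (Tm (x, s')) \<partial>S)"
      using measurable_Pair2[OF Tm_meas x] by (intro nn_integral_cmult) simp
    also have "\<dots> = h x" using T_norm[of "fst x" "snd x"] x by (simp add: Tm_def space_pair_measure mem_Times_iff)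
    finally show "(\<integral>\<^sup>+ s'. h x * ennreal (Tm (x, s')) \<partial>S) = h x" .
  qed
  finally show ?thesis .
qed

abbreviation "St \<equiv> sa_step S A pol T"

lemma step_eq: "St p = (\<lambda>y. enn2real (\<integral>\<^sup>+x. ennreal (p x) * ennreal (Tm (x, fst y)) \<partial>M) * Pm y)"
  unfolding sa_step_def
  by (auto simp: fun_eq_iff Tm_def Pm_def ennreal_mult'' T_nonneg split: prod.splits)

lemma step_nonneg: "St p y \<ge> 0"
  by (simp add: step_eq)

lemma step_meas[measurable]:
  assumes [measurable]: "p \<in> borel_measurable M"
  shows "St p \<in> borel_measurable M"
proof -
  have [measurable]: "(\<lambda>s'. \<integral>\<^sup>+x. ennreal (p x) * ennreal (Tm (x, s')) \<partial>M) \<in> borel_measurable S"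
    by (rule J_meas) simp
  show ?thesis unfolding step_eq by measurable
qed

lemma step_K:
  assumes "K (\<lambda>x. ennreal (p x)) y \<noteq> \<top>"
  shows "ennreal (St p y) = K (\<lambda>x. ennreal (p x)) y"
proof -
  define J where "J = (\<integral>\<^sup>+x. ennreal (p x) * ennreal (Tm (x, fst y)) \<partial>M)"
  have K: "K (\<lambda>x. ennreal (p x)) y = J * ennreal (Pm y)" by (simp add: K_def J_def)
  have st: "St p y = enn2real J * Pm y" by (simp add: step_eq J_def)
  show ?thesis
  proof (cases "Pm y = 0")
    case True then show ?thesis using K st by simp
  next
    case False
    then have "J \<noteq> \<top>" using assms K Pm_nonneg[of y] by (auto simp: ennreal_mult_eq_top_iff)
    then show ?thesis using K st by (simp add: ennreal_mult'' less_top)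
  qed
qed

definition pd :: "('s \<times> 'a \<Rightarrow> real) \<Rightarrow> bool" where
  "pd p \<longleftrightarrow> p \<in> borel_measurable M \<and> (\<forall>x. 0 \<le> p x) \<and> (\<integral>\<^sup>+x. ennreal (p x) \<partial>M) = 1"

lemma pd_nonneg: "pd p \<Longrightarrow> 0 \<le> p x" by (cases x) (simp add: pd_def)
lemma pd_meas: "pd p \<Longrightarrow> p \<in> borel_measurable M" by (simp add: pd_def)

lemma K_fin_AE:
  assumes "pd p"
  shows "AE y in M. K (\<lambda>x. ennreal (p x)) y \<noteq> \<top>"
proof -
  have [measurable]: "p \<in> borel_measurable M" using assms by (simp add: pd_def)
  have "(\<integral>\<^sup>+ y. K (\<lambda>x. ennreal (p x)) y \<partial>M) = 1"
    using assms by (subst K_int) (auto simp: pd_def)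
  then show ?thesis
    using nn_integral_PInf_AE[of "K (\<lambda>x. ennreal (p x))" M] by simp
qed

lemma step_pd:
  assumes "pd p"
  shows "pd (St p)"
proof -
  have [measurable]: "p \<in> borel_measurable M" using assms by (simp add: pd_def)
  have "(\<integral>\<^sup>+x. ennreal (St p x) \<partial>M) = (\<integral>\<^sup>+x. K (\<lambda>x. ennreal (p x)) x \<partial>M)"
    by (rule nn_integral_cong_AE) (use K_fin_AE[OF assms] in \<open>auto simp: step_K\<close>)
  also have "\<dots> = 1" using assms by (subst K_int) (auto simp: pd_def)
  finally show ?thesis by (auto simp: pd_def step_nonneg)
qed

lemma steps_pd: "pd p \<Longrightarrow> pd ((St ^^ k) p)"
  by (induction k) (auto intro: step_pd)

lemma contract_pt:
  assumes p: "\<And>x. p x \<ge> 0" and q: "\<And>x. q x \<ge> 0"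
    and [measurable]: "p \<in> borel_measurable M" "q \<in> borel_measurable M"
    and y: "y \<in> space M"
    and fp: "K (\<lambda>x. ennreal (p x)) y \<noteq> \<top>" and fq: "K (\<lambda>x. ennreal (q x)) y \<noteq> \<top>"
  shows "ennreal \<bar>St p y - St q y\<bar> \<le> K (\<lambda>x. ennreal \<bar>p x - q x\<bar>) y"
proof -
  define Jp where "Jp = (\<integral>\<^sup>+x. ennreal (p x) * ennreal (Tm (x, fst y)) \<partial>M)"
  define Jq where "Jq = (\<integral>\<^sup>+x. ennreal (q x) * ennreal (Tm (x, fst y)) \<partial>M)"
  define Jd where "Jd = (\<integral>\<^sup>+x. ennreal \<bar>p x - q x\<bar> * ennreal (Tm (x, fst y)) \<partial>M)"
  have sp: "St p y = enn2real Jp * Pm y" by (simp add: step_eq Jp_def)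
  have sq: "St q y = enn2real Jq * Pm y" by (simp add: step_eq Jq_def)
  have Kd: "K (\<lambda>x. ennreal \<bar>p x - q x\<bar>) y = Jd * ennreal (Pm y)" by (simp add: K_def Jd_def)
  have fy: "fst y \<in> space S" using y by (auto simp: space_pair_measure)
  note tm[measurable] = measurable_Pair1[OF Tm_meas fy]
  have le1: "Jp \<le> Jq + Jd"
  proof -
    have "Jp \<le> (\<integral>\<^sup>+x. ennreal (q x) * ennreal (Tm (x, fst y)) + ennreal \<bar>p x - q x\<bar> * ennreal (Tm (x, fst y)) \<partial>M)"
      unfolding Jp_def
    proof (rule nn_integral_mono)
      fix x
      have "ennreal (p x) \<le> ennreal (q x + \<bar>p x - q x\<bar>)" by (intro ennreal_leI) linarith
      then have "ennreal (p x) \<le> ennreal (q x) + ennreal \<bar>p x - q x\<bar>"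
        using q[of x] by (simp add: ennreal_plus)
      then show "ennreal (p x) * ennreal (Tm (x, fst y)) \<le> ennreal (q x) * ennreal (Tm (x, fst y)) + ennreal \<bar>p x - q x\<bar> * ennreal (Tm (x, fst y))"
        by (metis distrib_right mult_right_mono zero_le)
    qed
    also have "\<dots> = Jq + Jd" unfolding Jq_def Jd_def by (rule nn_integral_add) measurable
    finally show ?thesis .
  qed
  have le2: "Jq \<le> Jp + Jd"
  proof -
    have "Jq \<le> (\<integral>\<^sup>+x. ennreal (p x) * ennreal (Tm (x, fst y)) + ennreal \<bar>p x - q x\<bar> * ennreal (Tm (x, fst y)) \<partial>M)"
      unfolding Jq_def
    proof (rule nn_integral_mono)
      fix x
      have "ennreal (q x) \<le> ennreal (p x + \<bar>p x - q x\<bar>)" by (intro ennreal_leI) linarith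
      then have "ennreal (q x) \<le> ennreal (p x) + ennreal \<bar>p x - q x\<bar>"
        using p[of x] by (simp add: ennreal_plus)
      then show "ennreal (q x) * ennreal (Tm (x, fst y)) \<le> ennreal (p x) * ennreal (Tm (x, fst y)) + ennreal \<bar>p x - q x\<bar> * ennreal (Tm (x, fst y))"
        by (metis distrib_right mult_right_mono zero_le)
    qed
    also have "\<dots> = Jp + Jd" unfolding Jp_def Jd_def by (rule nn_integral_add) measurable
    finally show ?thesis .
  qed
  show ?thesis
  proof (cases "Pm y = 0")
    case True then show ?thesis using sp sq by simp
  next
    case False
    then have Pp: "Pm y > 0" using Pm_nonneg[of y] by linarith
    have "Jp \<noteq> \<top>" using fp Pp by (auto simp: K_def Jp_def ennreal_mult_eq_top_iff)
    then obtain jp where jp: "Jp = ennreal jp" "jp \<ge> 0" by (cases Jp) (auto simp: top_ennreal.rep_eq)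
    have "Jq \<noteq> \<top>" using fq Pp by (auto simp: K_def Jq_def ennreal_mult_eq_top_iff)
    then obtain jq where jq: "Jq = ennreal jq" "jq \<ge> 0" by (cases Jq) (auto simp: top_ennreal.rep_eq)
    show ?thesis
    proof (cases "Jd = \<top>")
      case True then show ?thesis using Kd Pp by (simp add: ennreal_mult_eq_top_iff)
    next
      case False
      then obtain jd where jd: "Jd = ennreal jd" "jd \<ge> 0" by (cases Jd) (auto simp: top_ennreal.rep_eq)
      have "jp \<le> jq + jd" using le1 jp jq jd by (simp add: ennreal_plus[symmetric] del: ennreal_plus)
      moreover have "jq \<le> jp + jd" using le2 jp jq jd by (simp add: ennreal_plus[symmetric] del: ennreal_plus)
      ultimately have "\<bar>jp - jq\<bar> * Pm y \<le> jd * Pm y" using Pp by (intro mult_right_mono) auto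
      then have "ennreal \<bar>St p y - St q y\<bar> \<le> ennreal (jd * Pm y)"
        using sp sq jp jq Pp by (intro ennreal_leI) (simp add: abs_mult left_diff_distrib[symmetric])
      then show ?thesis using Kd jd by (simp add: ennreal_mult'')
    qed
  qed
qed

lemma contract:
  assumes "pd p" "pd q"
  shows "(\<integral>\<^sup>+y. ennreal \<bar>St p y - St q y\<bar> \<partial>M) \<le> (\<integral>\<^sup>+x. ennreal \<bar>p x - q x\<bar> \<partial>M)"
proof -
  have [measurable]: "p \<in> borel_measurable M" "q \<in> borel_measurable M" using assms by (auto simp: pd_def)
  have "(\<integral>\<^sup>+y. ennreal \<bar>St p y - St q y\<bar> \<partial>M) \<le> (\<integral>\<^sup>+y. K (\<lambda>x. ennreal \<bar>p x - q x\<bar>) y \<partial>M)"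
    using K_fin_AE[OF assms(1)] K_fin_AE[OF assms(2)] AE_space[of M]
  proof (intro nn_integral_mono_AE, eventually_elim)
    case (elim y)
    then show ?case using assms by (intro contract_pt) (auto simp: pd_def)
  qed
  also have "\<dots> = (\<integral>\<^sup>+x. ennreal \<bar>p x - q x\<bar> \<partial>M)" by (rule K_int) measurable
  finally show ?thesis .
qed

abbreviation "Oc \<equiv> occupancy S A pol T"

definition R :: "real \<Rightarrow> ('s \<times> 'a \<Rightarrow> real) \<Rightarrow> 's \<times> 'a \<Rightarrow> ennreal" where
  "R lam p x = (\<Sum>t. ennreal ((1 - lam) * lam ^ t * (St ^^ t) p x))"

lemma Oc_eq: "Oc lam p x = enn2real (R lam p x)"
  by (simp add: occupancy_def R_def sa_dist_def)

lemma geo_sum: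
  assumes "0 \<le> lam" "lam < 1"
  shows "(\<Sum>t. ennreal ((1 - lam) * lam ^ t)) = 1"
proof -
  have "(\<lambda>t. (1 - lam) * lam ^ t) sums ((1 - lam) * (1 / (1 - lam)))"
    using assms by (intro sums_mult geometric_sums) auto
  then have "(\<lambda>t. (1 - lam) * lam ^ t) sums 1" using assms by simp
  then show ?thesis using assms
    by (subst suminf_ennreal2) (auto simp: sums_iff)
qed

lemma R_props:
  assumes "pd p" "0 \<le> lam" "lam < 1"
  shows "R lam p \<in> borel_measurable M" "(\<integral>\<^sup>+x. R lam p x \<partial>M) = 1"
    "AE x in M. R lam p x \<noteq> \<top>" "AE x in M. ennreal (Oc lam p x) = R lam p x" "pd (Oc lam p)"
proof -
  have pdt: "pd ((St ^^ t) p)" for t using steps_pd[OF assms(1)] .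
  have mt[measurable]: "(St ^^ t) p \<in> borel_measurable M" for t using pdt[of t] by (simp add: pd_def)
  show m[measurable]: "R lam p \<in> borel_measurable M" unfolding R_def[abs_def] by measurable
  have "(\<integral>\<^sup>+x. R lam p x \<partial>M) = (\<Sum>t. \<integral>\<^sup>+x. ennreal ((1 - lam) * lam ^ t * (St ^^ t) p x) \<partial>M)"
    unfolding R_def by (rule nn_integral_suminf) measurable
  also have "\<dots> = (\<Sum>t. ennreal ((1 - lam) * lam ^ t) * (\<integral>\<^sup>+x. ennreal ((St ^^ t) p x) \<partial>M))"
  proof (rule suminf_cong)
    fix t
    have "(\<integral>\<^sup>+x. ennreal ((1 - lam) * lam ^ t * (St ^^ t) p x) \<partial>M)
        = (\<integral>\<^sup>+x. ennreal ((1 - lam) * lam ^ t) * ennreal ((St ^^ t) p x) \<partial>M)"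
      by (intro nn_integral_cong ennreal_mult'' pd_nonneg[OF pdt])
    also have "\<dots> = ennreal ((1 - lam) * lam ^ t) * (\<integral>\<^sup>+x. ennreal ((St ^^ t) p x) \<partial>M)"
      by (rule nn_integral_cmult) measurable
    finally show "(\<integral>\<^sup>+x. ennreal ((1 - lam) * lam ^ t * (St ^^ t) p x) \<partial>M)
        = ennreal ((1 - lam) * lam ^ t) * (\<integral>\<^sup>+x. ennreal ((St ^^ t) p x) \<partial>M)" .
  qed
  also have "\<dots> = (\<Sum>t. ennreal ((1 - lam) * lam ^ t))"
    using pdt by (intro suminf_cong) (simp add: pd_def)
  also have "\<dots> = 1" by (rule geo_sum[OF assms(2,3)])
  finally show int1: "(\<integral>\<^sup>+x. R lam p x \<partial>M) = 1" .
  then show fin: "AE x in M. R lam p x \<noteq> \<top>"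
    using nn_integral_PInf_AE[of "R lam p" M] by simp
  then show ae: "AE x in M. ennreal (Oc lam p x) = R lam p x"
    by eventually_elim (simp add: Oc_eq less_top)
  have "(\<integral>\<^sup>+x. ennreal (Oc lam p x) \<partial>M) = 1"
    using int1 ae by (subst nn_integral_cong_AE[OF ae]) simp
  moreover have "Oc lam p \<in> borel_measurable M"
    unfolding Oc_eq[abs_def] by measurable
  ultimately show "pd (Oc lam p)" by (simp add: pd_def Oc_eq)
qed

lemma sum_assoc_aux: "(\<Sum>t. f t * g t) * (c::ennreal) = (\<Sum>t. f t * (g t * c))"
proof -
  have "(\<Sum>t. f t * g t) * c = (\<Sum>t. f t * g t * c)" by (rule ennreal_suminf_multc[symmetric])
  also have "\<dots> = (\<Sum>t. f t * (g t * c))" by (intro suminf_cong) (rule mult.assoc)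
  finally show ?thesis .
qed

lemma K_occ:
  assumes "pd p" "0 \<le> lam" "lam < 1" and y: "y \<in> space M"
  shows "K (\<lambda>x. ennreal (Oc lam p x)) y = (\<Sum>t. ennreal ((1 - lam) * lam ^ t) * K (\<lambda>x. ennreal ((St ^^ t) p x)) y)"
proof -
  have pdt: "pd ((St ^^ t) p)" for t using steps_pd[OF assms(1)] .
  have mt[measurable]: "(St ^^ t) p \<in> borel_measurable M" for t using pdt[of t] by (simp add: pd_def)
  have fy: "fst y \<in> space S" using y by (auto simp: space_pair_measure)
  note tm[measurable] = measurable_Pair1[OF Tm_meas fy]
  have "(\<integral>\<^sup>+x. ennreal (Oc lam p x) * ennreal (Tm (x, fst y)) \<partial>M) = (\<integral>\<^sup>+x. R lam p x * ennreal (Tm (x, fst y)) \<partial>M)"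
    using R_props(4)[OF assms(1-3)] by (intro nn_integral_cong_AE) auto
  also have "\<dots> = (\<integral>\<^sup>+x. (\<Sum>t. ennreal ((1 - lam) * lam ^ t) * (ennreal ((St ^^ t) p x) * ennreal (Tm (x, fst y)))) \<partial>M)"
  proof (intro nn_integral_cong)
    fix x
    have "R lam p x = (\<Sum>t. ennreal ((1 - lam) * lam ^ t) * ennreal ((St ^^ t) p x))"
      unfolding R_def by (intro suminf_cong ennreal_mult'' pd_nonneg[OF pdt])
    then show "R lam p x * ennreal (Tm (x, fst y)) = (\<Sum>t. ennreal ((1 - lam) * lam ^ t) * (ennreal ((St ^^ t) p x) * ennreal (Tm (x, fst y))))"
      by (metis sum_assoc_aux)
  qed
  also have "\<dots> = (\<Sum>t. \<integral>\<^sup>+x. ennreal ((1 - lam) * lam ^ t) * (ennreal ((St ^^ t) p x) * ennreal (Tm (x, fst y))) \<partial>M)"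
    by (rule nn_integral_suminf) measurable
  also have "\<dots> = (\<Sum>t. ennreal ((1 - lam) * lam ^ t) * (\<integral>\<^sup>+x. ennreal ((St ^^ t) p x) * ennreal (Tm (x, fst y)) \<partial>M))"
    by (intro suminf_cong nn_integral_cmult) measurable
  finally have "(\<integral>\<^sup>+x. ennreal (Oc lam p x) * ennreal (Tm (x, fst y)) \<partial>M) = (\<Sum>t. ennreal ((1 - lam) * lam ^ t) * (\<integral>\<^sup>+x. ennreal ((St ^^ t) p x) * ennreal (Tm (x, fst y)) \<partial>M))" .
  then show ?thesis unfolding K_def by (metis sum_assoc_aux)
qed

lemma suminf_head_ennreal: "(\<Sum>n. f n) = f 0 + (\<Sum>n. f (Suc n) :: ennreal)"
  by (metis sums_Suc summableI summable_sums sums_unique add.commute)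

lemma occ_fix:
  assumes "pd p" "0 < lam" "lam < 1"
  shows "AE y in M. Oc lam p y = (1 - lam) * p y + lam * St (Oc lam p) y"
proof -
  have pdt: "pd ((St ^^ t) p)" for t using steps_pd[OF assms(1)] .
  have lam0: "0 \<le> lam" using assms by simp
  have pdo: "pd (Oc lam p)" using R_props(5)[OF assms(1) lam0 assms(3)] .
  show ?thesis
    using K_fin_AE[OF pdo] R_props(3)[OF assms(1) lam0 assms(3)] AE_space[of M]
  proof eventually_elim
    case (elim y)
    define c where "c t = (1 - lam) * lam ^ t" for t
    have cpos: "c t > 0" for t using assms by (simp add: c_def)
    have KO: "K (\<lambda>x. ennreal (Oc lam p x)) y = (\<Sum>t. ennreal (c t) * K (\<lambda>x. ennreal ((St ^^ t) p x)) y)"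
      using K_occ[OF assms(1) lam0 assms(3) elim(3)] unfolding c_def .
    have SO: "ennreal (St (Oc lam p) y) = K (\<lambda>x. ennreal (Oc lam p x)) y"
      by (rule step_K[OF elim(1)])
    define F where "F t = ennreal (c t) * K (\<lambda>x. ennreal ((St ^^ t) p x)) y" for t
    have fin_t: "K (\<lambda>x. ennreal ((St ^^ t) p x)) y \<noteq> \<top>" for t
    proof
      assume a: "K (\<lambda>x. ennreal ((St ^^ t) p x)) y = \<top>"
      have "F t = \<top>" unfolding F_def a using cpos[of t] by (simp add: ennreal_mult_eq_top_iff)
      moreover have "F t \<le> suminf F"
        using sum_le_suminf[of F "{t}"] by simp
      ultimately have "suminf F = \<top>" by (metis top_unique)
      then show False using elim(1) KO unfolding F_def by simp
    qed
    have SO2: "ennreal (St (Oc lam p) y) = (\<Sum>t. ennreal (c t) * ennreal ((St ^^ Suc t) p y))"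
      unfolding SO KO
    proof (rule suminf_cong)
      fix t show "ennreal (c t) * K (\<lambda>x. ennreal ((St ^^ t) p x)) y = ennreal (c t) * ennreal ((St ^^ Suc t) p y)"
        using step_K[OF fin_t[of t]] by simp
    qed
    have "R lam p y = (\<Sum>t. ennreal (c t * (St ^^ t) p y))" by (simp add: R_def c_def)
    also have "\<dots> = ennreal (c 0 * (St ^^ 0) p y) + (\<Sum>t. ennreal (c (Suc t) * (St ^^ Suc t) p y))"
      by (rule suminf_head_ennreal)
    also have "(\<Sum>t. ennreal (c (Suc t) * (St ^^ Suc t) p y)) = (\<Sum>t. ennreal lam * (ennreal (c t) * ennreal ((St ^^ Suc t) p y)))"
    proof (rule suminf_cong)
      fix t
      have "c (Suc t) * (St ^^ Suc t) p y = lam * (c t * (St ^^ Suc t) p y)" by (simp add: c_def)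
      moreover have "ennreal (lam * (c t * (St ^^ Suc t) p y)) = ennreal lam * (ennreal (c t) * ennreal ((St ^^ Suc t) p y))"
        using lam0 cpos[of t] pd_nonneg[OF pdt[of "Suc t"], of y]
        by (simp add: ennreal_mult)
      ultimately show "ennreal (c (Suc t) * (St ^^ Suc t) p y) = ennreal lam * (ennreal (c t) * ennreal ((St ^^ Suc t) p y))"
        by metis
    qed
    also have "\<dots> = ennreal lam * ennreal (St (Oc lam p) y)"
      unfolding SO2 by (rule ennreal_suminf_cmult)
    also have "c 0 * (St ^^ 0) p y = (1 - lam) * p y" by (simp add: c_def)
    finally have "R lam p y = ennreal ((1 - lam) * p y) + ennreal lam * ennreal (St (Oc lam p) y)" .
    also have "\<dots> = ennreal ((1 - lam) * p y + lam * St (Oc lam p) y)"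
      using assms pd_nonneg[OF assms(1), of y] step_nonneg[of "Oc lam p" y]
      by (simp add: ennreal_plus ennreal_mult)
    finally have Rq: "R lam p y = ennreal ((1 - lam) * p y + lam * St (Oc lam p) y)" .
    have Xnn: "0 \<le> (1 - lam) * p y + lam * St (Oc lam p) y"
      using assms pd_nonneg[OF assms(1), of y] step_nonneg[of "Oc lam p" y] by simp
    have "Oc lam p y = enn2real (R lam p y)" by (rule Oc_eq)
    also have "\<dots> = (1 - lam) * p y + lam * St (Oc lam p) y" unfolding Rq by (rule enn2real_ennreal[OF Xnn])
    finally show ?case .
  qed
qed

end

context mdp
begin


definition D :: "('s \<times> 'a \<Rightarrow> real) \<Rightarrow> ('s \<times> 'a \<Rightarrow> real) \<Rightarrow> ennreal" where
  "D f g = (\<integral>\<^sup>+x. ennreal \<bar>f x - g x\<bar> \<partial>M)"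

lemma occ_tv1:
  assumes "pd p" "0 < lam" "lam < 1"
  shows "D (Oc lam p) (St (Oc lam p)) \<le> ennreal (2 * (1 - lam))"
proof -
  have lam0: "0 \<le> lam" using assms by simp
  have pdo: "pd (Oc lam p)" using R_props(5)[OF assms(1) lam0 assms(3)] .
  have pds: "pd (St (Oc lam p))" by (rule step_pd[OF pdo])
  have [measurable]: "p \<in> borel_measurable M" "St (Oc lam p) \<in> borel_measurable M"
    using assms(1) pds by (auto simp: pd_def)
  have "D (Oc lam p) (St (Oc lam p)) \<le> (\<integral>\<^sup>+y. ennreal (1 - lam) * ennreal (p y) + ennreal (1 - lam) * ennreal (St (Oc lam p) y) \<partial>M)"
    unfolding D_def using occ_fix[OF assms]
  proof (intro nn_integral_mono_AE, eventually_elim)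
    case (elim y)
    have pn: "0 \<le> p y" "0 \<le> St (Oc lam p) y" using pd_nonneg[OF assms(1)] step_nonneg by auto
    have "\<bar>Oc lam p y - St (Oc lam p) y\<bar> = (1 - lam) * \<bar>p y - St (Oc lam p) y\<bar>"
    proof -
      have e: "Oc lam p y - St (Oc lam p) y = (1 - lam) * (p y - St (Oc lam p) y)"
        by (simp only: elim) (simp add: algebra_simps)
      show ?thesis unfolding e using assms by (simp add: abs_mult)
    qed
    also have "\<dots> \<le> (1 - lam) * p y + (1 - lam) * St (Oc lam p) y"
    proof -
      have "\<bar>p y - St (Oc lam p) y\<bar> \<le> p y + St (Oc lam p) y" using pn by (auto simp: abs_if)
      then have "(1 - lam) * \<bar>p y - St (Oc lam p) y\<bar> \<le> (1 - lam) * (p y + St (Oc lam p) y)"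
        by (rule mult_left_mono) (use assms in simp)
      then show ?thesis by (simp add: distrib_left)
    qed
    finally have "ennreal \<bar>Oc lam p y - St (Oc lam p) y\<bar> \<le> ennreal ((1 - lam) * p y + (1 - lam) * St (Oc lam p) y)"
      by (rule ennreal_leI)
    then show ?case using pn assms by (simp add: ennreal_mult ennreal_plus)
  qed
  also have "\<dots> = ennreal (1 - lam) * (\<integral>\<^sup>+y. ennreal (p y) \<partial>M) + ennreal (1 - lam) * (\<integral>\<^sup>+y. ennreal (St (Oc lam p) y) \<partial>M)"
    by (simp add: nn_integral_add nn_integral_cmult)
  also have "\<dots> = ennreal (2 * (1 - lam))"
    using assms(1) pds assms by (simp add: pd_def ennreal_mult flip: ennreal_plus)
  finally show ?thesis .
qed

lemma D_tri:
  assumes [measurable]: "f \<in> borel_measurable M" "g \<in> borel_measurable M" "h \<in> borel_measurable M"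
  shows "D f h \<le> D f g + D g h"
proof -
  have "D f h \<le> (\<integral>\<^sup>+x. ennreal \<bar>f x - g x\<bar> + ennreal \<bar>g x - h x\<bar> \<partial>M)"
    unfolding D_def by (intro nn_integral_mono) (simp add: ennreal_plus[symmetric] ennreal_leI del: ennreal_plus)
  also have "\<dots> = D f g + D g h" unfolding D_def by (rule nn_integral_add) measurable
  finally show ?thesis .
qed

lemma D_iter: "pd f \<Longrightarrow> pd g \<Longrightarrow> D ((St ^^ k) f) ((St ^^ k) g) \<le> D f g"
proof (induction k)
  case 0 then show ?case by simp
next
  case (Suc k)
  have "D ((St ^^ Suc k) f) ((St ^^ Suc k) g) \<le> D ((St ^^ k) f) ((St ^^ k) g)"
    unfolding D_def using contract[OF steps_pd[OF Suc.prems(1)] steps_pd[OF Suc.prems(2)]] by simp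
  then show ?case using Suc by (meson order_trans)
qed

lemma D_k:
  assumes "pd r"
  shows "D r ((St ^^ k) r) \<le> of_nat k * D r (St r)"
proof (induction k)
  case 0 then show ?case by (simp add: D_def)
next
  case (Suc k)
  have m: "(St ^^ j) r \<in> borel_measurable M" for j using steps_pd[OF assms] by (simp add: pd_def)
  have "D r ((St ^^ Suc k) r) \<le> D r ((St ^^ k) r) + D ((St ^^ k) r) ((St ^^ Suc k) r)"
    using D_tri[OF m[of 0] m[of k] m[of "Suc k"]] by simp
  also have "D ((St ^^ k) r) ((St ^^ Suc k) r) = D ((St ^^ k) r) ((St ^^ k) (St r))"
    by (simp add: funpow_swap1)
  also have "\<dots> \<le> D r (St r)" by (rule D_iter[OF assms step_pd[OF assms]])
  finally have "D r ((St ^^ Suc k) r) \<le> D r ((St ^^ k) r) + D r (St r)" by simp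
  also have "\<dots> \<le> of_nat k * D r (St r) + D r (St r)" using Suc by (simp add: add_right_mono)
  finally show ?case by (simp add: algebra_simps)
qed

lemma occ_mix:
  assumes "pd r" "0 \<le> lam" "lam < 1"
  shows "D r (Oc lam r) \<le> (\<Sum>k. ennreal ((1 - lam) * lam ^ k) * D r ((St ^^ k) r))"
proof -
  have pdt: "pd ((St ^^ k) r)" for k using steps_pd[OF assms(1)] .
  have [measurable]: "(St ^^ k) r \<in> borel_measurable M" for k using pdt[of k] by (simp add: pd_def)
  have [measurable]: "r \<in> borel_measurable M" using assms(1) by (simp add: pd_def)
  define w where "w k = (1 - lam) * lam ^ k" for k
  have w0: "0 \<le> w k" for k using assms by (simp add: w_def)
  have wsum: "w sums 1"
  proof -
    have "(\<lambda>t. (1 - lam) * lam ^ t) sums ((1 - lam) * (1 / (1 - lam)))"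
      using assms by (intro sums_mult geometric_sums) auto
    then show ?thesis using assms unfolding w_def[abs_def] by simp
  qed
  have "D r (Oc lam r) \<le> (\<integral>\<^sup>+y. (\<Sum>k. ennreal (w k) * ennreal \<bar>r y - (St ^^ k) r y\<bar>) \<partial>M)"
    unfolding D_def using R_props(3)[OF assms]
  proof (intro nn_integral_mono_AE, eventually_elim)
    case (elim y)
    define c where "c k = w k * (St ^^ k) r y" for k
    have c0: "0 \<le> c k" for k using w0 pd_nonneg[OF pdt] by (simp add: c_def)
    have Rc: "R lam r y = (\<Sum>k. ennreal (c k))" by (simp add: R_def c_def w_def)
    have sc: "summable c" using elim Rc c0 by (intro summable_suminf_not_top) auto
    have Oc: "Oc lam r y = (\<Sum>k. c k)"
      using Rc c0 sc by (simp add: Oc_eq suminf_ennreal2 suminf_nonneg)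
    define g where "g k = w k * r y - c k" for k
    have sw: "summable (\<lambda>k. w k * r y)" using wsum by (intro summable_mult2) (simp add: sums_iff)
    have sg: "summable g" unfolding g_def using sw sc by (rule summable_diff)
    have eq1: "r y - Oc lam r y = (\<Sum>k. g k)"
    proof -
      have "(\<lambda>k. w k * r y) sums (1 * r y)" using wsum by (rule sums_mult2)
      then have "(\<Sum>k. w k * r y) = r y" by (simp add: sums_iff)
      then show ?thesis unfolding Oc g_def using suminf_diff[OF sw sc] by metis
    qed
    have ga: "\<bar>g k\<bar> = w k * \<bar>r y - (St ^^ k) r y\<bar>" for k
      using w0[of k] by (simp add: g_def c_def abs_mult right_diff_distrib[symmetric])
    have sga: "summable (\<lambda>k. \<bar>g k\<bar>)"
    proof (rule summable_comparison_test)
      show "\<exists>N. \<forall>n\<ge>N. norm \<bar>g n\<bar> \<le> w n * r y + c n"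
        using w0 c0 pd_nonneg[OF assms(1), of y] by (auto simp: g_def abs_if)
      show "summable (\<lambda>n. w n * r y + c n)" using sw sc by (rule summable_add)
    qed
    have "\<bar>r y - Oc lam r y\<bar> \<le> (\<Sum>k. \<bar>g k\<bar>)" unfolding eq1 by (rule summable_rabs[OF sga])
    then have "ennreal \<bar>r y - Oc lam r y\<bar> \<le> ennreal (\<Sum>k. \<bar>g k\<bar>)" by (rule ennreal_leI)
    also have "\<dots> = (\<Sum>k. ennreal \<bar>g k\<bar>)" using sga by (simp add: suminf_ennreal2)
    also have "\<dots> = (\<Sum>k. ennreal (w k) * ennreal \<bar>r y - (St ^^ k) r y\<bar>)"
      by (intro suminf_cong) (simp add: ga ennreal_mult w0)
    finally show ?case .
  qed
  also have "\<dots> = (\<Sum>k. \<integral>\<^sup>+y. ennreal (w k) * ennreal \<bar>r y - (St ^^ k) r y\<bar> \<partial>M)"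
    by (rule nn_integral_suminf) measurable
  also have "\<dots> = (\<Sum>k. ennreal (w k) * D r ((St ^^ k) r))"
    unfolding D_def by (intro suminf_cong nn_integral_cmult) measurable
  finally show ?thesis by (simp add: w_def)
qed

end

lemma kgeo_sums:
  fixes b :: real assumes "0 \<le> b" "b < 1"
  shows "(\<lambda>k. real k * b ^ k) sums (b / (1 - b)^2)"
proof -
  have "(\<lambda>n. of_nat (Suc n) * b ^ n) sums (1 / (1 - b)^2)"
    using assms by (intro geometric_deriv_sums) simp
  then have "(\<lambda>n. b * (of_nat (Suc n) * b ^ n)) sums (b * (1 / (1 - b)^2))" by (rule sums_mult)
  then have "(\<lambda>n. real (Suc n) * b ^ Suc n) sums (b / (1 - b)^2)" by (simp add: algebra_simps)
  then show ?thesis by (subst (asm) sums_Suc_iff) simp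
qed

theorem lemma2:
  fixes S :: "'s measure" and A :: "'a measure"
    and alpha :: "'s \<Rightarrow> real" and pol :: "'s \<Rightarrow> 'a \<Rightarrow> real"
    and T :: "'s \<Rightarrow> 'a \<Rightarrow> 's \<Rightarrow> real" and beta gamma :: real
  assumes "sigma_finite_measure S" and "sigma_finite_measure A"
    and alpha_meas: "alpha \<in> borel_measurable S"
    and alpha_nonneg: "\<And>s. alpha s \<ge> 0"
    and alpha_norm: "(\<integral>\<^sup>+ s. ennreal (alpha s) \<partial>S) = 1"
    and pol_meas: "(\<lambda>(s, a). pol s a) \<in> borel_measurable (S \<Otimes>\<^sub>M A)"
    and pol_nonneg: "\<And>s a. pol s a \<ge> 0"
    and pol_norm: "\<And>s. s \<in> space S \<Longrightarrow> (\<integral>\<^sup>+ a. ennreal (pol s a) \<partial>A) = 1"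
    and T_meas: "(\<lambda>((s, a), s'). T s a s') \<in> borel_measurable ((S \<Otimes>\<^sub>M A) \<Otimes>\<^sub>M S)"
    and T_nonneg: "\<And>s a s'. T s a s' \<ge> 0"
    and T_norm: "\<And>s a. s \<in> space S \<Longrightarrow> a \<in> space A \<Longrightarrow> (\<integral>\<^sup>+ s'. ennreal (T s a s') \<partial>S) = 1"
    and "0 < beta" and "beta < gamma" and "gamma < 1"
  shows "tv_dist (S \<Otimes>\<^sub>M A)
           (occupancy S A pol T gamma (init_sa alpha pol))
           (occupancy S A pol T beta (occupancy S A pol T gamma (init_sa alpha pol)))
         \<le> (1 - gamma) * beta / (gamma - beta)"
proof -
  interpret mdp S A pol T
    using assms by (simp add: mdp_def)
  interpret SA: pair_sigma_finite S A using assms by (simp add: pair_sigma_finite_def)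
  define p0 where "p0 = init_sa alpha pol"
  have p0_eq: "p0 = (\<lambda>x. alpha (fst x) * pol (fst x) (snd x))"
    by (auto simp: p0_def init_sa_def fun_eq_iff)
  have pd0: "pd p0"
  proof -
    have [measurable]: "alpha \<in> borel_measurable S" by (rule alpha_meas)
    have pm[measurable]: "(\<lambda>x. pol (fst x) (snd x)) \<in> borel_measurable M"
      using Pm_meas by (simp add: Pm_def[abs_def])
    have m: "p0 \<in> borel_measurable M" unfolding p0_eq by measurable
    have "(\<integral>\<^sup>+x. ennreal (p0 x) \<partial>M) = (\<integral>\<^sup>+s. (\<integral>\<^sup>+a. ennreal (p0 (s, a)) \<partial>A) \<partial>S)"
      using SA.M2.nn_integral_fst[of "\<lambda>x. ennreal (p0 x)" S] m by simp
    also have "\<dots> = (\<integral>\<^sup>+s. ennreal (alpha s) \<partial>S)"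
    proof (rule nn_integral_cong)
      fix s assume s: "s \<in> space S"
      have "(\<integral>\<^sup>+a. ennreal (p0 (s, a)) \<partial>A) = (\<integral>\<^sup>+a. ennreal (alpha s) * ennreal (pol s a) \<partial>A)"
        unfolding p0_eq using pol_nonneg by (intro nn_integral_cong) (simp add: ennreal_mult'')
      also have "\<dots> = ennreal (alpha s) * (\<integral>\<^sup>+a. ennreal (pol s a) \<partial>A)"
        using measurable_Pair2[OF pm s] by (intro nn_integral_cmult) simp
      also have "\<dots> = ennreal (alpha s)" using pol_norm[OF s] by simp
      finally show "(\<integral>\<^sup>+a. ennreal (p0 (s, a)) \<partial>A) = ennreal (alpha s)" .
    qed
    finally show ?thesis using m alpha_nonneg pol_nonneg alpha_norm
      by (simp add: pd_def p0_eq)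
  qed
  have g0: "0 \<le> gamma" "0 < gamma" "gamma < 1" using assms by auto
  have b0: "0 \<le> beta" "beta < 1" using assms by auto
  define r where "r = Oc gamma p0"
  have pdr: "pd r" unfolding r_def by (rule R_props(5)[OF pd0 g0(1,3)])
  define q where "q = Oc beta r"
  have pdq: "pd q" unfolding q_def by (rule R_props(5)[OF pdr b0])
  define B where "B = 2 * ((1 - gamma) * (beta / (1 - beta)))"
  have "D r q \<le> (\<Sum>k. ennreal ((1 - beta) * beta ^ k) * D r ((St ^^ k) r))"
    unfolding q_def by (rule occ_mix[OF pdr b0])
  also have "\<dots> \<le> (\<Sum>k. ennreal ((1 - beta) * beta ^ k) * (of_nat k * ennreal (2 * (1 - gamma))))"
  proof (intro suminf_le mult_left_mono summableI)
    fix k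
    have "D r ((St ^^ k) r) \<le> of_nat k * D r (St r)" by (rule D_k[OF pdr])
    also have "\<dots> \<le> of_nat k * ennreal (2 * (1 - gamma))"
      unfolding r_def by (intro mult_left_mono occ_tv1[OF pd0 g0(2,3)]) simp
    finally show "D r ((St ^^ k) r) \<le> of_nat k * ennreal (2 * (1 - gamma))" .
  qed simp
  also have "\<dots> = (\<Sum>k. ennreal ((1 - beta) * beta ^ k * real k * (2 * (1 - gamma))))"
    using b0 g0 by (intro suminf_cong) (simp add: ennreal_mult ennreal_of_nat_eq_real_of_nat mult.assoc)
  also have "\<dots> = ennreal B"
  proof -
    have "(\<lambda>k. real k * beta ^ k) sums (beta / (1 - beta)^2)" by (rule kgeo_sums[OF b0])
    then have "(\<lambda>k. (1 - beta) * (2 * (1 - gamma)) * (real k * beta ^ k)) sums ((1 - beta) * (2 * (1 - gamma)) * (beta / (1 - beta)^2))"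
      by (rule sums_mult)
    moreover have "(1 - beta) * (2 * (1 - gamma)) * (beta / (1 - beta)^2) = B"
    proof -
      have nz: "1 - beta \<noteq> 0" using b0 by simp
      have "(1 - beta) * (2 * (1 - gamma)) * (beta / (1 - beta)^2) = (2 * (1 - gamma) * beta) * ((1 - beta) / ((1 - beta) * (1 - beta)))"
        by (simp add: power2_eq_square)
      also have "(1 - beta) / ((1 - beta) * (1 - beta)) = 1 / (1 - beta)" using nz by simp
      finally show ?thesis by (simp add: B_def)
    qed
    ultimately have "(\<lambda>k. (1 - beta) * beta ^ k * real k * (2 * (1 - gamma))) sums B"
      by (simp add: algebra_simps)
    then show ?thesis using b0 g0 by (subst suminf_ennreal2) (auto simp: sums_iff)
  qed
  finally have DB: "D r q \<le> ennreal B" .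
  have int_le: "(\<integral>x. \<bar>r x - q x\<bar> \<partial>M) \<le> B"
  proof (cases "integrable M (\<lambda>x. \<bar>r x - q x\<bar>)")
    case True
    then have "(\<integral>x. \<bar>r x - q x\<bar> \<partial>M) = enn2real (D r q)"
      unfolding D_def by (intro integral_eq_nn_integral) auto
    also have "\<dots> \<le> enn2real (ennreal B)" using DB by (intro enn2real_mono) auto
    also have "\<dots> = B" using b0 g0 by (simp add: B_def)
    finally show ?thesis .
  next
    case False
    then show ?thesis using b0 g0 by (simp add: not_integrable_integral_eq B_def)
  qed
  have "B / 2 \<le> (1 - gamma) * beta / (gamma - beta)"
  proof -
    have "beta / (1 - beta) \<le> beta / (gamma - beta)"
      using assms by (intro divide_left_mono) auto
    then have "(1 - gamma) * (beta / (1 - beta)) \<le> (1 - gamma) * (beta / (gamma - beta))"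
      using assms by (intro mult_left_mono) auto
    moreover have "B / 2 = (1 - gamma) * (beta / (1 - beta))"
      unfolding B_def by (rule nonzero_mult_div_cancel_left) simp
    ultimately show ?thesis by (simp only: times_divide_eq_right)
  qed
  then show ?thesis
    using int_le unfolding tv_dist_def q_def r_def p0_def by simp
qed

end
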